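(* Let $\mathcal{X}=\sum_{i=1}^n\mathcal{Y}_i$ where $\mathcal{Y}_1,\dots,\mathcal{Y}_n$ are i.i.d. random tensors in $\mathbb{R}^{d_1\times\cdots\times d_k}$. Assume there are reals $a\le b$ such that, almost surely, $a\le\mathcal{Y}_i(\mathbf{u}_1,\dots,\mathbf{u}_k)\le b$ for every $i$ and all unit vectors $\mathbf{u}_1\in\mathbb{R}^{d_1},\dots,\mathbf{u}_k\in\mathbb{R}^{d_k}$, and let $\sigma:=b-a$. Then for every $t>0$, $$P\left(\|\mathcal{X}-\mathbb{E}\mathcal{X}\|\ge t\right)\le k_0^{\sum_{i=1}^k d_i}\cdot 2\exp\left(-\frac{t^2}{2n\sigma^2}\right),\qquad k_0=\frac{2k}{\log(3/2)}.$$
   Context: For a tensor $\mathcal{Z}\in\mathbb{R}^{d_1\times\cdots\times d_k}$ and vectors $\mathbf{u}_i\in\mathbb{R}^{d_i}$, $\mathcal{Z}(\mathbf{u}_1,\dots,\mathbf{u}_k)=\sum_{j_1,\dots,j_k}\mathcal{Z}_{j_1\dots j_k}(\mathbf{u}_1)_{j_1}\cdots(\mathbf{u}_k)_{j_k}$. The spectral norm is $\|\mathcal{Z}\|=\sup_{\|\mathbf{u}_1\|=\dots=\|\mathbf{u}_k\|=1}\mathcal{Z}(\mathbf{u}_1,\dots,\mathbf{u}_k)$ (Euclidean norms). *)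

theory Defs
  imports "HOL-Probability.Probability"
begin

text \<open>An order-k tensor with dimensions d 0, ..., d (k-1) is represented as a
function from multi-indices (nat \<Rightarrow> nat) to reals; only the multi-indices in
tidx k d are relevant.  A k-tuple of vectors is u :: nat \<Rightarrow> nat \<Rightarrow> real, where
u i is the i-th vector with coordinates u i 0, ..., u i (d i - 1).\<close>

type_synonym tensor = "(nat \<Rightarrow> nat) \<Rightarrow> real"

definition tidx :: "nat \<Rightarrow> (nat \<Rightarrow> nat) \<Rightarrow> (nat \<Rightarrow> nat) set" where
  "tidx k d = PiE {..<k} (\<lambda>i. {..<d i})"

definition tapply :: "nat \<Rightarrow> (nat \<Rightarrow> nat) \<Rightarrow> tensor \<Rightarrow> (nat \<Rightarrow> nat \<Rightarrow> real) \<Rightarrow> real" where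
  "tapply k d Z u = (\<Sum>j\<in>tidx k d. Z j * (\<Prod>i<k. u i (j i)))"

definition unit_tuple :: "nat \<Rightarrow> (nat \<Rightarrow> nat) \<Rightarrow> (nat \<Rightarrow> nat \<Rightarrow> real) \<Rightarrow> bool" where
  "unit_tuple k d u \<longleftrightarrow> (\<forall>i<k. sqrt (\<Sum>j<d i. (u i j)\<^sup>2) = 1)"

definition tnorm :: "nat \<Rightarrow> (nat \<Rightarrow> nat) \<Rightarrow> tensor \<Rightarrow> real" where
  "tnorm k d Z = (SUP u\<in>{u. unit_tuple k d u}. tapply k d Z u)"

definition texp :: "'a measure \<Rightarrow> ('a \<Rightarrow> tensor) \<Rightarrow> tensor" where
  "texp M X = (\<lambda>j. integral\<^sup>L M (\<lambda>\<omega>. X \<omega> j))"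

definition tspace :: "nat \<Rightarrow> (nat \<Rightarrow> nat) \<Rightarrow> tensor measure" where
  "tspace k d = PiM (tidx k d) (\<lambda>_. borel)"

end

theory Submission
  imports Defs
begin

abbreviation LL :: "nat \<Rightarrow> (nat \<Rightarrow> real) measure" where
  "LL d \<equiv> PiM {..<d} (\<lambda>_. lborel)"

definition bl :: "nat \<Rightarrow> (nat \<Rightarrow> real) \<Rightarrow> real \<Rightarrow> (nat \<Rightarrow> real) set" where
  "bl d c r = {x \<in> space (LL d). L2_set (\<lambda>i. x i - c i) {..<d} < r}"

lemma bl_sets[measurable]: "bl d c r \<in> sets (LL d)"
  unfolding bl_def L2_set_def by measurable

lemma lborel_affine_pre:
  fixes r c :: real assumes "r > 0" "A \<in> sets borel"
  shows "emeasure lborel A = ennreal r * emeasure lborel {x. c + r * x \<in> A}"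
proof -
  have "emeasure lborel A = emeasure (density (distr lborel borel (\<lambda>x. c + r * x)) (\<lambda>_. ennreal \<bar>r\<bar>)) A"
    using lborel_real_affine[of r c] assms by simp
  also have "\<dots> = ennreal r * emeasure lborel {x. c + r * x \<in> A}"
    using assms by (simp add: emeasure_density emeasure_distr nn_integral_cmult_indicator vimage_def)
  finally show ?thesis .
qed

lemma psf: "product_sigma_finite (\<lambda>_::nat. lborel::real measure)"
  by (simp add: product_sigma_finite_def sigma_finite_lborel)

lemma LL_scale:
  fixes r :: real and c :: "nat \<Rightarrow> real" and d :: nat assumes r: "r > 0"
  defines "T \<equiv> (\<lambda>x. restrict (\<lambda>i. c i + r * x i) {..<d})"
  shows "density (distr (LL d) (LL d) T) (\<lambda>_. ennreal (r ^ d)) = LL d"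
proof (rule product_sigma_finite.PiM_eqI[OF psf])
  have Tm[measurable]: "T \<in> measurable (LL d) (LL d)"
    unfolding T_def by measurable
  show "finite {..<d}" by simp
  show "sets (density (distr (LL d) (LL d) T) (\<lambda>_. ennreal (r ^ d))) = sets (LL d)" by simp
  fix A :: "nat \<Rightarrow> real set" assume A: "\<And>i. i \<in> {..<d} \<Longrightarrow> A i \<in> sets lborel"
  have PA: "Pi\<^sub>E {..<d} A \<in> sets (LL d)" using A by (intro sets_PiM_I_finite) auto
  have pre: "T -` Pi\<^sub>E {..<d} A \<inter> space (LL d) = Pi\<^sub>E {..<d} (\<lambda>i. {x. c i + r * x \<in> A i})"
    unfolding T_def by (auto simp: space_PiM PiE_def Pi_def extensional_def)
  have As: "\<And>i. i < d \<Longrightarrow> {x. c i + r * x \<in> A i} \<in> sets lborel"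
  proof -
    fix i assume "i < d"
    hence "A i \<in> sets borel" using A by simp
    hence "(\<lambda>x. c i + r * x) -` A i \<inter> space borel \<in> sets borel" by measurable
    thus "{x. c i + r * x \<in> A i} \<in> sets lborel" by (simp add: vimage_def)
  qed
  have "emeasure (density (distr (LL d) (LL d) T) (\<lambda>_. ennreal (r ^ d))) (Pi\<^sub>E {..<d} A)
      = ennreal (r ^ d) * emeasure (LL d) (Pi\<^sub>E {..<d} (\<lambda>i. {x. c i + r * x \<in> A i}))"
    using PA by (simp add: emeasure_density emeasure_distr nn_integral_cmult_indicator pre)
  also have "\<dots> = ennreal (r ^ d) * (\<Prod>i<d. emeasure lborel {x. c i + r * x \<in> A i})"
    using As by (subst product_sigma_finite.emeasure_PiM[OF psf]) auto
  also have "\<dots> = (\<Prod>i<d. ennreal r * emeasure lborel {x. c i + r * x \<in> A i})"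
    using r by (simp add: prod.distrib ennreal_power)
  also have "\<dots> = (\<Prod>i<d. emeasure lborel (A i))"
    using A r by (intro prod.cong refl lborel_affine_pre[symmetric]) auto
  finally show "emeasure (density (distr (LL d) (LL d) T) (\<lambda>_. ennreal (r ^ d))) (Pi\<^sub>E {..<d} A)
      = (\<Prod>i\<in>{..<d}. emeasure lborel (A i))" by simp
qed

lemma bl_scale:
  fixes r :: real assumes r: "r > 0"
  shows "emeasure (LL d) (bl d c r) = ennreal (r ^ d) * emeasure (LL d) (bl d (\<lambda>_. 0) 1)"
proof -
  define T where "T \<equiv> (\<lambda>x. restrict (\<lambda>i. c i + r * x i) {..<d})"
  have Tm[measurable]: "T \<in> measurable (LL d) (LL d)"
    unfolding T_def by measurable
  have pre: "T -` bl d c r \<inter> space (LL d) = bl d (\<lambda>_. 0) 1"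
  proof -
    have "L2_set (\<lambda>i. T x i - c i) {..<d} = r * L2_set x {..<d}" for x
    proof -
      have "L2_set (\<lambda>i. T x i - c i) {..<d} = L2_set (\<lambda>i. r * x i) {..<d}"
        by (rule L2_set_cong) (auto simp: T_def)
      thus ?thesis using r by (simp add: L2_set_right_distrib)
    qed
    thus ?thesis using r unfolding bl_def
      by (auto simp: T_def space_PiM PiE_def Pi_def extensional_def)
  qed
  have "emeasure (LL d) (bl d c r) = emeasure (density (distr (LL d) (LL d) T) (\<lambda>_. ennreal (r ^ d))) (bl d c r)"
    using LL_scale[OF r, where c=c and d=d] unfolding T_def by simp
  also have "\<dots> = ennreal (r ^ d) * emeasure (LL d) (bl d (\<lambda>_. 0) 1)"
    by (simp add: emeasure_density emeasure_distr nn_integral_cmult_indicator pre)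
  finally show ?thesis .
qed

lemma L2_set_diff_commute: "L2_set (\<lambda>i. x i - y i) A = L2_set (\<lambda>i. y i - x i) A"
  unfolding L2_set_def by (simp add: power2_commute)

lemma L2_set_diff_tri: "L2_set (\<lambda>i. x i - z i) A \<le> L2_set (\<lambda>i. x i - y i) A + L2_set (\<lambda>i. y i - z i) A"
  using L2_set_triangle_ineq[of "\<lambda>i. x i - y i" "\<lambda>i. y i - z i" A] by simp

lemma abs_le_L2_set: "finite A \<Longrightarrow> i \<in> A \<Longrightarrow> \<bar>x i\<bar> \<le> L2_set x A"
  using member_le_L2_set[of A i "\<lambda>i. \<bar>x i\<bar>"] unfolding L2_set_def by simp

lemma bl_unit_pos: "0 < emeasure (LL d) (bl d (\<lambda>_. 0) 1)"
proof -
  define B where "B = Pi\<^sub>E {..<d} (\<lambda>_. {-1/(real d+1)<..<1/(real d+1)})"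
  have "B \<subseteq> bl d (\<lambda>_. 0) 1"
  proof
    fix x assume x: "x \<in> B"
    have "L2_set x {..<d} \<le> (\<Sum>i<d. \<bar>x i\<bar>)" by (rule L2_set_le_sum_abs)
    also have "\<dots> \<le> (\<Sum>i<d. 1/(real d+1))"
      using x by (intro sum_mono) (auto simp: B_def PiE_def Pi_def abs_less_iff less_imp_le)
    also have "\<dots> < 1" by (simp add: field_simps)
    finally show "x \<in> bl d (\<lambda>_. 0) 1" using x by (auto simp: bl_def B_def space_PiM PiE_def)
  qed
  moreover have "emeasure (LL d) B = (\<Prod>i<d. emeasure lborel {-1/(real d+1)<..<1/(real d+1)})"
    unfolding B_def by (subst product_sigma_finite.emeasure_PiM[OF psf]) auto
  moreover have "\<dots> > 0" by (simp, subst ennreal_power) auto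
  ultimately show ?thesis
    by (metis bl_sets emeasure_mono order_less_le_trans)
qed

lemma bl_unit_fin: "emeasure (LL d) (bl d (\<lambda>_. 0) 1) < \<infinity>"
proof -
  define B where "B = Pi\<^sub>E {..<d} (\<lambda>_. {-1..1::real})"
  have "bl d (\<lambda>_. 0) 1 \<subseteq> B"
  proof
    fix x assume x: "x \<in> bl d (\<lambda>_. 0) 1"
    { fix i assume "i < d"
      hence "\<bar>x i\<bar> \<le> L2_set x {..<d}" by (intro abs_le_L2_set) auto
      also have "\<dots> < 1" using x by (simp add: bl_def)
      finally have "\<bar>x i\<bar> \<le> 1" by simp }
    thus "x \<in> B" using x by (auto simp: bl_def B_def space_PiM PiE_def Pi_def abs_le_iff)
  qed
  moreover have "emeasure (LL d) B = (\<Prod>i<d. emeasure lborel {-1..1::real})"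
    unfolding B_def by (subst product_sigma_finite.emeasure_PiM[OF psf]) auto
  moreover have "\<dots> < \<infinity>" by (simp add: power_less_top_ennreal)
  moreover have "B \<in> sets (LL d)" unfolding B_def by (intro sets_PiM_I_finite) auto
  ultimately show ?thesis
    by (metis emeasure_mono order_le_less_trans)
qed

lemma packing:
  fixes e :: real
  assumes e: "e > 0" and fin: "finite S" and Ssp: "S \<subseteq> space (LL d)"
    and nrm: "\<forall>x\<in>S. L2_set x {..<d} \<le> 1"
    and sep: "\<forall>x\<in>S. \<forall>y\<in>S. x \<noteq> y \<longrightarrow> e < L2_set (\<lambda>i. x i - y i) {..<d}"
  shows "real (card S) \<le> (1 + 2/e) ^ d"
proof -
  obtain v where v: "emeasure (LL d) (bl d (\<lambda>_. 0) 1) = ennreal v" "v > 0"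
    using bl_unit_pos[of d] bl_unit_fin[of d]
    by (cases "emeasure (LL d) (bl d (\<lambda>_. 0) 1)") auto
  have disj: "disjoint_family_on (\<lambda>s. bl d s (e/2)) S"
  unfolding disjoint_family_on_def
  proof (intro ballI impI)
    fix s s' assume s: "s \<in> S" "s' \<in> S" "s \<noteq> s'"
    show "bl d s (e/2) \<inter> bl d s' (e/2) = {}"
    proof (rule ccontr)
      assume "bl d s (e/2) \<inter> bl d s' (e/2) \<noteq> {}"
      then obtain x where x: "x \<in> bl d s (e/2)" "x \<in> bl d s' (e/2)" by blast
      have "L2_set (\<lambda>i. s i - s' i) {..<d} \<le> L2_set (\<lambda>i. s i - x i) {..<d} + L2_set (\<lambda>i. x i - s' i) {..<d}"
        by (rule L2_set_diff_tri)
      also have "\<dots> < e" using x by (simp add: bl_def L2_set_diff_commute[of s])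
      finally show False using sep s by force
    qed
  qed
  have sub: "(\<Union>s\<in>S. bl d s (e/2)) \<subseteq> bl d (\<lambda>_. 0) (1 + e/2)"
  proof safe
    fix s x assume s: "s \<in> S" and x: "x \<in> bl d s (e/2)"
    have "L2_set x {..<d} \<le> L2_set (\<lambda>i. x i - s i) {..<d} + L2_set (\<lambda>i. s i - 0) {..<d}"
      using L2_set_diff_tri[of x "\<lambda>_. 0" "{..<d}" s] by simp
    also have "\<dots> < e/2 + 1"
    proof -
      have "L2_set (\<lambda>i. x i - s i) {..<d} < e/2" using x by (simp add: bl_def)
      moreover have "L2_set s {..<d} \<le> 1" using nrm s by blast
      ultimately show ?thesis by simp
    qed
    finally show "x \<in> bl d (\<lambda>_. 0) (1 + e/2)" using x by (auto simp: bl_def)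
  qed
  have eq1: "emeasure (LL d) (bl d c r) = ennreal (r^d * v)" if "r > 0" for c r
    using bl_scale[OF that, of d c] v that by (simp add: ennreal_mult)
  have "(\<Sum>s\<in>S. emeasure (LL d) (bl d s (e/2))) = emeasure (LL d) (\<Union>s\<in>S. bl d s (e/2))"
    using disj fin by (intro sum_emeasure) auto
  also have "\<dots> \<le> emeasure (LL d) (bl d (\<lambda>_. 0) (1 + e/2))"
    using sub by (intro emeasure_mono) auto
  finally have "(\<Sum>s\<in>S. ennreal ((e/2)^d * v)) \<le> ennreal ((1 + e/2)^d * v)"
    using e by (simp add: eq1)
  hence "ennreal (real (card S) * ((e/2)^d * v)) \<le> ennreal ((1 + e/2)^d * v)"
    using e v by (simp add: ennreal_of_nat_eq_real_of_nat ennreal_mult[symmetric])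
  hence "real (card S) * ((e/2)^d * v) \<le> (1 + e/2)^d * v"
    using e v by (subst (asm) ennreal_le_iff) (auto intro!: mult_nonneg_nonneg)
  hence "real (card S) * (e/2)^d \<le> (1 + e/2)^d" using v by (simp add: mult.assoc[symmetric])
  hence "real (card S) \<le> (1 + e/2)^d / (e/2)^d" using e by (simp add: pos_le_divide_eq)
  also have "\<dots> = ((1 + e/2) / (e/2))^d" by (rule power_divide[symmetric])
  also have "(1 + e/2) / (e/2) = 1 + 2/e" using e by (simp add: field_simps)
  finally show ?thesis .
qed

lemma net_exists:
  fixes e :: real assumes e: "e > 0"
  shows "\<exists>N. finite N \<and> (\<forall>v\<in>N. L2_set v {..<d} = 1) \<and> real (card N) \<le> (1 + 2/e) ^ d
     \<and> (\<forall>u. L2_set u {..<d} = 1 \<longrightarrow> (\<exists>v\<in>N. L2_set (\<lambda>i. u i - v i) {..<d} \<le> e))"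
proof -
  define C where "C = {S. finite S \<and> S \<subseteq> space (LL d) \<and> (\<forall>x\<in>S. L2_set x {..<d} = 1) \<and>
     (\<forall>x\<in>S. \<forall>y\<in>S. x \<noteq> y \<longrightarrow> e < L2_set (\<lambda>i. x i - y i) {..<d})}"
  define P where "P m \<longleftrightarrow> (\<exists>S\<in>C. card S = m)" for m
  have P0: "P 0" unfolding P_def C_def by (intro bexI[of _ "{}"]) auto
  have Pb: "\<forall>m. P m \<longrightarrow> m \<le> nat \<lceil>(1 + 2/e) ^ d\<rceil>"
  proof safe
    fix m assume "P m"
    then obtain S where S: "S \<in> C" "card S = m" unfolding P_def by blast
    hence "real m \<le> (1 + 2/e) ^ d" using packing[OF e, of S d] unfolding C_def by auto
    thus "m \<le> nat \<lceil>(1 + 2/e) ^ d\<rceil>" by linarith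
  qed
  obtain m where m: "P m" "\<forall>m'. P m' \<longrightarrow> m' \<le> m" using Nat.ex_has_greatest_nat[OF P0 Pb] by blast
  then obtain S where S: "S \<in> C" "card S = m" unfolding P_def by blast
  have cov: "\<exists>v\<in>S. L2_set (\<lambda>i. u i - v i) {..<d} \<le> e" if u: "L2_set u {..<d} = 1" for u
  proof (rule ccontr)
    assume nc: "\<not> ?thesis"
    define u' where "u' = restrict u {..<d}"
    have eq: "L2_set (\<lambda>i. u' i - v i) {..<d} = L2_set (\<lambda>i. u i - v i) {..<d}" for v
      by (rule L2_set_cong) (auto simp: u'_def)
    have u'n: "L2_set u' {..<d} = 1" using u by (subst L2_set_cong[of _ _ _ u]) (auto simp: u'_def)
    have u'S: "u' \<notin> S"
    proof
      assume "u' \<in> S"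
      hence "e < L2_set (\<lambda>i. u i - u' i) {..<d}" using nc not_le by blast
      thus False using eq[of u'] e by (simp add: L2_set_def)
    qed
    have "insert u' S \<in> C"
      unfolding C_def
    proof (intro CollectI conjI ballI impI)
      show "finite (insert u' S)" using S by (simp add: C_def)
      show "insert u' S \<subseteq> space (LL d)" using S by (auto simp: C_def u'_def space_PiM)
      fix x assume "x \<in> insert u' S"
      thus "L2_set x {..<d} = 1" using S u'n by (auto simp: C_def)
    next
      fix x y assume xy: "x \<in> insert u' S" "y \<in> insert u' S" "x \<noteq> y"
      have far: "e < L2_set (\<lambda>i. u' i - v i) {..<d}" if "v \<in> S" for v
        using nc that eq[of v] not_le by fastforce
      show "e < L2_set (\<lambda>i. x i - y i) {..<d}"
        using xy S far far[of x] L2_set_diff_commute[of x u'] unfolding C_def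
        by (cases "x = u'"; cases "y = u'") auto
    qed
    hence "P (Suc m)" using S u'S unfolding P_def C_def by (intro bexI[of _ "insert u' S"]) auto
    thus False using m by force
  qed
  show ?thesis
  proof (intro exI[of _ S] conjI)
    show "finite S" "\<forall>v\<in>S. L2_set v {..<d} = 1" using S by (auto simp: C_def)
    show "real (card S) \<le> (1 + 2/e) ^ d" using S packing[OF e, of S d] by (auto simp: C_def)
    show "\<forall>u. L2_set u {..<d} = 1 \<longrightarrow> (\<exists>v\<in>S. L2_set (\<lambda>i. u i - v i) {..<d} \<le> e)"
      using cov by blast
  qed
qed

lemma tidx_finite[simp]: "finite (tidx k d)"
  unfolding tidx_def by (auto intro!: finite_PiE)

lemma tidx_lt: "j \<in> tidx k d \<Longrightarrow> i < k \<Longrightarrow> j i < d i"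
  unfolding tidx_def by (auto simp: PiE_def Pi_def)

lemma tapply_cong:
  assumes "\<And>i l. i < k \<Longrightarrow> l < d i \<Longrightarrow> u i l = w i l"
  shows "tapply k d Z u = tapply k d Z w"
proof -
  have "(\<Prod>i<k. u i (j i)) = (\<Prod>i<k. w i (j i))" if "j \<in> tidx k d" for j
    using assms tidx_lt[OF that] by (intro prod.cong) auto
  thus ?thesis unfolding tapply_def by (intro sum.cong) auto
qed

lemma tapply_upd:
  assumes "i < k"
  shows "tapply k d Z (u(i := x)) = (\<Sum>j\<in>tidx k d. Z j * x (j i) * (\<Prod>i'\<in>{..<k}-{i}. u i' (j i')))"
proof -
  have "(\<Prod>i'<k. (u(i := x)) i' (j i')) = x (j i) * (\<Prod>i'\<in>{..<k}-{i}. u i' (j i'))" for j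
    using assms by (subst prod.remove[of _ i]) (auto intro!: prod.cong)
  thus ?thesis unfolding tapply_def by (simp add: mult.assoc)
qed

lemma tapply_lin:
  assumes "i < k"
  shows "tapply k d Z (u(i := (\<lambda>l. \<alpha> * x l + \<beta> * y l)))
       = \<alpha> * tapply k d Z (u(i := x)) + \<beta> * tapply k d Z (u(i := y))"
  using assms by (simp add: tapply_upd sum.distrib sum_distrib_left algebra_simps)

lemma tapply_diff:
  assumes "i < k"
  shows "tapply k d Z (u(i := (\<lambda>l. x l - y l)))
       = tapply k d Z (u(i := x)) - tapply k d Z (u(i := y))"
  using tapply_lin[OF assms, where Z=Z and u=u and \<alpha>=1 and x=x and \<beta>="-1" and y=y] by simp

lemma tapply_sumlin:
  assumes "i < k" "finite A"
  shows "tapply k d Z (u(i := (\<lambda>l. \<Sum>m\<in>A. c m * x m l)))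
       = (\<Sum>m\<in>A. c m * tapply k d Z (u(i := x m)))"
  using assms by (simp add: tapply_upd sum_distrib_left sum_distrib_right mult_ac sum.swap[of _ A])

lemma tapply_scale:
  "tapply k d Z (\<lambda>i l. c i * w i l) = (\<Prod>i<k. c i) * tapply k d Z w"
  unfolding tapply_def by (simp add: prod.distrib sum_distrib_left mult_ac)

lemma tapply_zero_slot:
  assumes "i < k" "\<And>l. l < d i \<Longrightarrow> w i l = 0"
  shows "tapply k d Z w = 0"
proof -
  have "(\<Prod>i'<k. w i' (j i')) = 0" if "j \<in> tidx k d" for j
    using assms tidx_lt[OF that assms(1)] by (intro prod_zero) auto
  thus ?thesis unfolding tapply_def by (metis (no_types, lifting) mult_zero_right sum.neutral)
qed

lemma tapply_neg:
  assumes "i < k"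
  shows "tapply k d Z (w(i := (\<lambda>l. - w i l))) = - tapply k d Z w"
  using tapply_lin[OF assms, where Z=Z and u=w and \<alpha>="-1" and x="w i" and \<beta>=0 and y="w i"] by simp

lemma unit_tuple_abs:
  assumes "unit_tuple k d u" "i < k" "l < d i"
  shows "\<bar>u i l\<bar> \<le> 1"
  using abs_le_L2_set[of "{..<d i}" l "u i"] assms unfolding unit_tuple_def L2_set_def by auto

lemma tapply_bdd:
  assumes "unit_tuple k d u"
  shows "\<bar>tapply k d Z u\<bar> \<le> (\<Sum>j\<in>tidx k d. \<bar>Z j\<bar>)"
proof -
  have "\<bar>tapply k d Z u\<bar> \<le> (\<Sum>j\<in>tidx k d. \<bar>Z j * (\<Prod>i<k. u i (j i))\<bar>)"
    unfolding tapply_def by (rule sum_abs)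
  also have "\<dots> \<le> (\<Sum>j\<in>tidx k d. \<bar>Z j\<bar>)"
  proof (intro sum_mono)
    fix j assume j: "j \<in> tidx k d"
    have "\<bar>\<Prod>i<k. u i (j i)\<bar> = (\<Prod>i<k. \<bar>u i (j i)\<bar>)" by (simp add: abs_prod)
    also have "\<dots> \<le> 1" using unit_tuple_abs[OF assms] tidx_lt[OF j] by (intro prod_le_1) auto
    finally show "\<bar>Z j * (\<Prod>i<k. u i (j i))\<bar> \<le> \<bar>Z j\<bar>"
      by (simp add: abs_mult mult_left_le)
  qed
  finally show ?thesis .
qed

lemma tnorm_bdd: "bdd_above ((\<lambda>u. tapply k d Z u) ` {u. unit_tuple k d u})"
  using tapply_bdd by (intro bdd_aboveI[of _ "\<Sum>j\<in>tidx k d. \<bar>Z j\<bar>"]) (fastforce simp: abs_le_iff)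

lemma tnorm_upper: "unit_tuple k d u \<Longrightarrow> tapply k d Z u \<le> tnorm k d Z"
  unfolding tnorm_def by (rule cSUP_upper[OF _ tnorm_bdd]) auto

lemma tnorm_upper_neg:
  assumes "unit_tuple k d u" "k \<ge> 1"
  shows "- tapply k d Z u \<le> tnorm k d Z"
proof -
  have "unit_tuple k d (u(0 := (\<lambda>l. - u 0 l)))" using assms unfolding unit_tuple_def L2_set_def by auto
  hence "tapply k d Z (u(0 := (\<lambda>l. - u 0 l))) \<le> tnorm k d Z" by (rule tnorm_upper)
  thus ?thesis using tapply_neg[of 0 k d Z u] assms by simp
qed

lemma tnorm_bound:
  assumes "k \<ge> 1"
  shows "\<bar>tapply k d Z w\<bar> \<le> tnorm k d Z * (\<Prod>i<k. L2_set (w i) {..<d i})"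
proof (cases "\<exists>i<k. L2_set (w i) {..<d i} = 0")
  case True
  then obtain i where i: "i < k" "L2_set (w i) {..<d i} = 0" by blast
  hence "tapply k d Z w = 0" by (intro tapply_zero_slot[OF i(1)]) (auto simp: L2_set_eq_0_iff)
  moreover have "(\<Prod>i<k. L2_set (w i) {..<d i}) = 0" using i by (intro prod_zero) auto
  ultimately show ?thesis by (metis abs_zero mult_zero_right order_refl)
next
  case False
  define c where "c i = L2_set (w i) {..<d i}" for i
  have cpos: "c i > 0" if "i < k" for i using False that L2_set_nonneg[of "w i" "{..<d i}"]
    unfolding c_def by (metis order_le_less)
  define w' where "w' i l = w i l / c i" for i l
  have unit: "unit_tuple k d w'"
    unfolding unit_tuple_def
  proof safe
    fix i assume i: "i < k"
    have "sqrt (\<Sum>j<d i. (w' i j)\<^sup>2) = L2_set (\<lambda>l. (1 / c i) * w i l) {..<d i}"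
      unfolding w'_def L2_set_def by simp
    also have "\<dots> = 1 / c i * L2_set (w i) {..<d i}"
      using cpos[OF i] by (intro L2_set_right_distrib[symmetric]) simp
    also have "\<dots> = 1 / c i * c i" by (simp add: c_def)
    finally show "sqrt (\<Sum>j<d i. (w' i j)\<^sup>2) = 1" using cpos[OF i] by simp
  qed
  have "tapply k d Z w = tapply k d Z (\<lambda>i l. c i * w' i l)"
    using cpos by (intro tapply_cong) (force simp: w'_def)
  also have "\<dots> = (\<Prod>i<k. c i) * tapply k d Z w'" by (rule tapply_scale)
  finally have eq: "tapply k d Z w = (\<Prod>i<k. c i) * tapply k d Z w'" .
  have "\<bar>tapply k d Z w'\<bar> \<le> tnorm k d Z"
    using tnorm_upper[OF unit] tnorm_upper_neg[OF unit assms] by (simp add: abs_le_iff)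
  moreover have "(\<Prod>i<k. c i) \<ge> 0" using cpos by (intro prod_nonneg) (simp add: less_imp_le)
  ultimately show ?thesis unfolding eq c_def[symmetric] abs_mult
    by (metis abs_of_nonneg mult.commute mult_left_mono)
qed

definition dl :: "nat \<Rightarrow> nat \<Rightarrow> real" where "dl l = (\<lambda>m. if m = l then 1 else 0)"

definition gv :: "nat \<Rightarrow> (nat \<Rightarrow> nat) \<Rightarrow> tensor \<Rightarrow> (nat \<Rightarrow> nat \<Rightarrow> real) \<Rightarrow> nat \<Rightarrow> real" where
  "gv k d Z w = (\<lambda>l. tapply k d Z (w(k-1 := dl l)))"

lemma gv_upd[simp]: "gv k d Z (w(k-1 := x)) = gv k d Z w"
  unfolding gv_def by simp

lemma gv_upd'[simp]: "gv k d Z (w(k - Suc 0 := x)) = gv k d Z w"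
  unfolding gv_def by simp

lemma L2_sq: "(L2_set x A)\<^sup>2 = (\<Sum>l\<in>A. (x l)\<^sup>2)"
  unfolding L2_set_def by (simp add: sum_nonneg)

lemma gv_expand:
  assumes "k \<ge> 1"
  shows "tapply k d Z w = (\<Sum>l<d (k-1). w (k-1) l * gv k d Z w l)"
proof -
  have "tapply k d Z w = tapply k d Z (w(k-1 := (\<lambda>l'. \<Sum>m<d (k-1). w (k-1) m * dl m l')))"
  proof (intro tapply_cong)
    fix i l assume "i < k" "l < d i"
    thus "w i l = (w(k - 1 := (\<lambda>l'. \<Sum>m<d (k-1). w (k-1) m * dl m l'))) i l"
      by (cases "i = k-1") (auto simp: dl_def if_distrib cong: if_cong)
  qed
  also have "\<dots> = (\<Sum>m<d (k-1). w (k-1) m * tapply k d Z (w(k-1 := dl m)))"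
    using assms by (intro tapply_sumlin) auto
  finally show ?thesis unfolding gv_def by simp
qed

lemma gv_bound:
  assumes k: "k \<ge> 1" and M: "tnorm k d Z \<ge> 0"
  shows "L2_set (gv k d Z w) {..<d (k-1)} \<le> tnorm k d Z * (\<Prod>i<k-1. L2_set (w i) {..<d i})"
proof -
  define g where "g = gv k d Z w"
  define s where "s = L2_set g {..<d (k-1)}"
  define P where "P = (\<Prod>i<k-1. L2_set (w i) {..<d i})"
  have P0: "P \<ge> 0" unfolding P_def by (intro prod_nonneg) auto
  have "s * s = (\<Sum>l<d (k-1). g l * g l)" using L2_sq[of g] unfolding s_def by (simp add: power2_eq_square)
  also have "\<dots> = tapply k d Z (w(k-1 := g))"
    using gv_expand[OF k, of d Z "w(k-1 := g)"] unfolding g_def by simp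
  also have "\<dots> \<le> tnorm k d Z * (\<Prod>i<k. L2_set ((w(k-1 := g)) i) {..<d i})"
    using tnorm_bound[OF k, of d Z "w(k-1 := g)"] by simp
  also have "(\<Prod>i<k. L2_set ((w(k-1 := g)) i) {..<d i}) = P * s"
  proof -
    have kk: "k = Suc (k-1)" using k by simp
    have "(\<Prod>i<k. L2_set ((w(k-1 := g)) i) {..<d i}) = (\<Prod>i<Suc (k-1). L2_set ((w(k-1 := g)) i) {..<d i})"
      using kk by metis
    also have "\<dots> = P * s" unfolding P_def s_def by (simp add: prod.lessThan_Suc)
    finally show ?thesis .
  qed
  finally have "s * s \<le> (tnorm k d Z * P) * s" by (simp add: mult.assoc)
  moreover have "s \<ge> 0" unfolding s_def by simp
  ultimately have "s \<le> tnorm k d Z * P"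
    using M P0 by (cases "s = 0") (auto simp: mult_le_cancel_right)
  thus ?thesis unfolding s_def g_def P_def .
qed

lemma prod_le_eps:
  fixes f :: "nat \<Rightarrow> real"
  assumes "finite A" "m \<in> A" "\<And>i. i \<in> A \<Longrightarrow> 0 \<le> f i" "\<And>i. i \<in> A \<Longrightarrow> i \<noteq> m \<Longrightarrow> f i \<le> 1" "f m \<le> e"
  shows "prod f A \<le> e"
proof -
  have "prod f A = f m * prod f (A - {m})" using assms by (simp add: prod.remove)
  also have "\<dots> \<le> f m * 1"
  proof -
    have "prod f (A - {m}) \<le> 1" using assms by (intro prod_le_1) blast
    thus ?thesis using assms(3)[OF assms(2)] by (intro mult_left_mono) auto
  qed
  finally show ?thesis using assms by simp
qed

lemma gv_tele:
  assumes k: "k \<ge> 1" and M: "tnorm k d Z \<ge> 0"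
    and u: "\<And>i. i < k-1 \<Longrightarrow> L2_set (u i) {..<d i} \<le> 1"
    and v: "\<And>i. i < k-1 \<Longrightarrow> L2_set (v i) {..<d i} \<le> 1"
    and uv: "\<And>i. i < k-1 \<Longrightarrow> L2_set (\<lambda>l. u i l - v i l) {..<d i} \<le> e"
  shows "m \<le> k-1 \<Longrightarrow> L2_set (\<lambda>l. gv k d Z (\<lambda>i. if i < m then v i else u i) l - gv k d Z u l) {..<d (k-1)}
           \<le> real m * e * tnorm k d Z"
proof (induction m)
  case 0
  thus ?case by (simp add: L2_set_def)
next
  case (Suc m)
  define H where "H = (\<lambda>i. if i < m then v i else u i)"
  have mK: "m < k-1" using Suc by simp
  have hS: "(\<lambda>i. if i < Suc m then v i else u i) = H(m := v m)"
    unfolding H_def by (auto simp: fun_eq_iff)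
  have Hm: "H m = u m" unfolding H_def by simp
  have dif: "gv k d Z (H(m := v m)) l - gv k d Z H l = gv k d Z (H(m := (\<lambda>x. v m x - u m x))) l" for l
  proof -
    have mk: "m \<noteq> k-1" "m < k" using mK by auto
    have "gv k d Z (H(m := v m)) l = tapply k d Z ((H(k-1 := dl l))(m := v m))"
      unfolding gv_def using mk by (simp add: fun_upd_twist)
    moreover have "gv k d Z H l = tapply k d Z ((H(k-1 := dl l))(m := u m))"
      unfolding gv_def using mk Hm by (metis fun_upd_other fun_upd_triv)
    moreover have "gv k d Z (H(m := (\<lambda>x. v m x - u m x))) l
        = tapply k d Z ((H(k-1 := dl l))(m := (\<lambda>x. v m x - u m x)))"
      unfolding gv_def using mk by (simp add: fun_upd_twist)
    ultimately show ?thesis using tapply_diff[OF mk(2)] by simp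
  qed
  have step: "L2_set (\<lambda>l. gv k d Z (H(m := v m)) l - gv k d Z H l) {..<d (k-1)} \<le> e * tnorm k d Z"
  proof -
    have "L2_set (\<lambda>l. gv k d Z (H(m := v m)) l - gv k d Z H l) {..<d (k-1)}
        = L2_set (gv k d Z (H(m := (\<lambda>x. v m x - u m x)))) {..<d (k-1)}" using dif by simp
    also have "\<dots> \<le> tnorm k d Z * (\<Prod>i<k-1. L2_set ((H(m := (\<lambda>x. v m x - u m x))) i) {..<d i})"
      by (rule gv_bound[OF k M])
    finally have 1: "L2_set (\<lambda>l. gv k d Z (H(m := v m)) l - gv k d Z H l) {..<d (k-1)}
       \<le> tnorm k d Z * (\<Prod>i<k-1. L2_set ((H(m := (\<lambda>x. v m x - u m x))) i) {..<d i})" .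
    have "(\<Prod>i<k-1. L2_set ((H(m := (\<lambda>x. v m x - u m x))) i) {..<d i}) \<le> e"
    proof (rule prod_le_eps[of _ m])
      show "L2_set ((H(m := (\<lambda>x. v m x - u m x))) m) {..<d m} \<le> e"
        using uv[OF mK] L2_set_diff_commute[of "v m" "u m"] by simp
      fix i assume "i \<in> {..<k-1}" "i \<noteq> m"
      thus "L2_set ((H(m := (\<lambda>x. v m x - u m x))) i) {..<d i} \<le> 1"
        using u v unfolding H_def by auto
    qed (use mK in auto)
    hence "tnorm k d Z * (\<Prod>i<k-1. L2_set ((H(m := (\<lambda>x. v m x - u m x))) i) {..<d i}) \<le> tnorm k d Z * e"
      using M by (intro mult_left_mono) auto
    with 1 show ?thesis by (simp add: mult.commute)
  qed
  have "L2_set (\<lambda>l. gv k d Z (H(m := v m)) l - gv k d Z u l) {..<d (k-1)}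
      \<le> L2_set (\<lambda>l. gv k d Z (H(m := v m)) l - gv k d Z H l) {..<d (k-1)}
        + L2_set (\<lambda>l. gv k d Z H l - gv k d Z u l) {..<d (k-1)}"
    by (rule L2_set_diff_tri)
  also have "\<dots> \<le> e * tnorm k d Z + real m * e * tnorm k d Z"
    using step Suc.IH[unfolded H_def[symmetric]] Suc.prems by (intro add_mono) auto
  finally show ?case unfolding hS by (simp add: algebra_simps)
qed

lemma inner_lower:
  assumes "finite A" "L2_set x A = 1" "L2_set w A = 1" "L2_set (\<lambda>l. x l - w l) A \<le> e"
  shows "(\<Sum>l\<in>A. w l * x l) \<ge> 1 - e\<^sup>2 / 2"
proof -
  have "(L2_set (\<lambda>l. x l - w l) A)\<^sup>2 \<le> e\<^sup>2"
    using assms(4) by (intro power_mono) auto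
  moreover have "(L2_set (\<lambda>l. x l - w l) A)\<^sup>2 = (\<Sum>l\<in>A. (x l)\<^sup>2) - 2 * (\<Sum>l\<in>A. w l * x l) + (\<Sum>l\<in>A. (w l)\<^sup>2)"
    by (simp add: L2_sq power2_diff sum.distrib sum_subtractf sum_distrib_left algebra_simps)
  moreover have "(\<Sum>l\<in>A. (x l)\<^sup>2) = 1" "(\<Sum>l\<in>A. (w l)\<^sup>2) = 1"
    using L2_sq[of x A] L2_sq[of w A] assms by auto
  ultimately show ?thesis by simp
qed

lemma arith1:
  fixes k :: real assumes k: "k \<ge> 1"
  shows "(2*k+1)/(4*k) * (1 - (2/(k+2))\<^sup>2/2) \<ge> 1/2"
proof -
  have h1: "(2/(k+2))\<^sup>2/2 = 2/(k+2)\<^sup>2" by (simp add: power_divide power2_eq_square)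
  have e: "(k+2)\<^sup>2 = 2*(2*k+1) + (k\<^sup>2 + 2)" by (simp add: power2_eq_square algebra_simps)
  have "2*(2*k+1) \<le> (k+2)\<^sup>2" unfolding e by simp
  hence h2: "2/(k+2)\<^sup>2 \<le> 1/(2*k+1)" using k by (simp add: field_simps)
  have q: "1 - (2/(k+2))\<^sup>2/2 \<ge> 2*k/(2*k+1)"
  proof -
    have "2*k/(2*k+1) = 1 - 1/(2*k+1)" using k by (simp add: field_simps)
    thus ?thesis using h1 h2 by simp
  qed
  have "0 < k * 4 + k * (k * 8)" using k by (intro add_pos_nonneg) auto
  moreover have "k \<noteq> 0" "2*k+1 \<noteq> 0" using k by auto
  ultimately have "k \<noteq> 0" "2*k+1 \<noteq> 0" "k * 4 + k * (k * 8) \<noteq> 0" by auto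
  hence "(2*k+1)/(4*k) * (2*k/(2*k+1)) = 1/2" by (simp add: field_simps)
  moreover have "(2*k+1)/(4*k) * (2*k/(2*k+1)) \<le> (2*k+1)/(4*k) * (1 - (2/(k+2))\<^sup>2/2)"
    using q k by (intro mult_left_mono) auto
  ultimately show ?thesis by linarith
qed

lemma det_main:
  fixes Z :: tensor and N :: "nat \<Rightarrow> (nat \<Rightarrow> real) set"
  assumes k: "k \<ge> 1" and dpos: "\<forall>i<k. d i \<ge> 1"
    and Mpos: "tnorm k d Z > 0"
    and Nunit: "\<forall>i<k. \<forall>v\<in>N i. L2_set v {..<d i} = 1"
    and cov1: "\<forall>i<k-1. \<forall>u. L2_set u {..<d i} = 1 \<longrightarrow> (\<exists>v\<in>N i. L2_set (\<lambda>l. u l - v l) {..<d i} \<le> 1/(2*real k))"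
    and cov2: "\<forall>u. L2_set u {..<d (k-1)} = 1 \<longrightarrow> (\<exists>v\<in>N (k-1). L2_set (\<lambda>l. u l - v l) {..<d (k-1)} \<le> 2/(real k+2))"
  shows "\<exists>v\<in>PiE {..<k} N. tapply k d Z v \<ge> tnorm k d Z / 2"
proof -
  define M where "M = tnorm k d Z"
  define K where "K = k - 1"
  have KK: "K < k" using k unfolding K_def by simp
  define u0 where "u0 = (\<lambda>(i::nat) (l::nat). if l = 0 then 1 else (0::real))"
  have "unit_tuple k d u0"
    unfolding unit_tuple_def
  proof safe
    fix i assume "i < k"
    hence "0 \<in> {..<d i}" using dpos by auto
    have "(\<Sum>j<d i. (u0 i j)\<^sup>2) = (\<Sum>j<d i. if j = 0 then 1 else 0)"
      by (intro sum.cong) (auto simp: u0_def)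
    also have "\<dots> = 1" using \<open>0 \<in> {..<d i}\<close> by simp
    finally have "(\<Sum>j<d i. (u0 i j)\<^sup>2) = 1" .
    thus "sqrt (\<Sum>j<d i. (u0 i j)\<^sup>2) = 1" by simp
  qed
  hence Une: "{u. unit_tuple k d u} \<noteq> {}" by blast
  have "M - M/(4*k) < M" using Mpos k unfolding M_def by simp
  then obtain u where u: "unit_tuple k d u" "tapply k d Z u > M - M/(4*k)"
    unfolding M_def tnorm_def using less_cSUP_iff[OF Une tnorm_bdd] by auto
  have un: "L2_set (u i) {..<d i} = 1" if "i < k" for i
    using u(1) that unfolding unit_tuple_def L2_set_def by auto
  have cs: "tapply k d Z u \<le> L2_set (gv k d Z u) {..<d K}"
  proof -
    have "tapply k d Z u = (\<Sum>l<d K. u K l * gv k d Z u l)" unfolding K_def by (rule gv_expand[OF k])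
    also have "\<dots> \<le> (\<Sum>l<d K. \<bar>u K l\<bar> * \<bar>gv k d Z u l\<bar>)"
      by (intro sum_mono) (metis abs_ge_self abs_mult)
    also have "\<dots> \<le> L2_set (u K) {..<d K} * L2_set (gv k d Z u) {..<d K}" by (rule L2_set_mult_ineq)
    finally show ?thesis using un[OF KK] by simp
  qed
  have "\<forall>i. \<exists>v. i < K \<longrightarrow> v \<in> N i \<and> L2_set (\<lambda>l. u i l - v l) {..<d i} \<le> 1/(2*real k)"
    using cov1 un KK unfolding K_def by (metis less_trans)
  then obtain vsel where vsel: "\<And>i. i < K \<Longrightarrow> vsel i \<in> N i \<and> L2_set (\<lambda>l. u i l - vsel i l) {..<d i} \<le> 1/(2*real k)"
    by metis
  define vt where "vt = (\<lambda>i. if i < K then vsel i else u i)"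
  have M0: "M \<ge> 0" using Mpos unfolding M_def by simp
  have tele: "L2_set (\<lambda>l. gv k d Z vt l - gv k d Z u l) {..<d K} \<le> real K * (1/(2*real k)) * M"
    unfolding vt_def M_def K_def
  proof (rule gv_tele[OF k])
    show "0 \<le> tnorm k d Z" using M0 unfolding M_def .
    fix i assume i: "i < k-1"
    show "L2_set (u i) {..<d i} \<le> 1" using un i by simp
    show "L2_set (vsel i) {..<d i} \<le> 1" using Nunit vsel[of i] i unfolding K_def by auto
    show "L2_set (\<lambda>l. u i l - vsel i l) {..<d i} \<le> 1/(2*real k)" using vsel[of i] i unfolding K_def by auto
  qed simp
  define s where "s = L2_set (gv k d Z vt) {..<d K}"
  have "L2_set (gv k d Z u) {..<d K} \<le> L2_set (\<lambda>l. gv k d Z u l - gv k d Z vt l) {..<d K} + L2_set (\<lambda>l. gv k d Z vt l - 0) {..<d K}"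
    using L2_set_diff_tri[of "gv k d Z u" "\<lambda>_. 0" "{..<d K}" "gv k d Z vt"] by simp
  hence "L2_set (gv k d Z u) {..<d K} \<le> real K * (1/(2*real k)) * M + s"
    using tele L2_set_diff_commute[of "gv k d Z u" "gv k d Z vt"] unfolding s_def by simp
  hence slow: "s > M - M/(4*k) - real K * (1/(2*real k)) * M" using cs u(2) by simp
  have "M - M/(4*k) - real K * (1/(2*real k)) * M = M * ((2*k+1)/(4*k))"
    using k unfolding K_def by (simp add: field_simps of_nat_diff)
  with slow have slow2: "s > M * ((2*k+1)/(4*k))" by simp
  moreover have "M * ((2*k+1)/(4*k)) > 0" using Mpos k unfolding M_def by (intro mult_pos_pos divide_pos_pos) auto
  ultimately have spos: "s > 0" by simp
  define gh where "gh = (\<lambda>l. gv k d Z vt l / s)"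
  have ghn: "L2_set gh {..<d K} = 1"
  proof -
    have "L2_set gh {..<d K} = L2_set (\<lambda>l. (1/s) * gv k d Z vt l) {..<d K}" unfolding gh_def by simp
    also have "\<dots> = 1/s * s" unfolding s_def using spos by (intro L2_set_right_distrib[symmetric]) (simp add: s_def)
    finally show ?thesis using spos by simp
  qed
  obtain w where w: "w \<in> N K" "L2_set (\<lambda>l. gh l - w l) {..<d K} \<le> 2/(real k+2)"
    using cov2 ghn unfolding K_def by blast
  have wn: "L2_set w {..<d K} = 1" using Nunit w(1) KK by auto
  define fv where "fv = restrict (vt(K := w)) {..<k}"
  have fvN: "fv \<in> PiE {..<k} N"
    unfolding fv_def using vsel w(1) KK by (auto simp: vt_def PiE_def Pi_def K_def)
  have "tapply k d Z fv = tapply k d Z (vt(K := w))"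
    unfolding fv_def by (intro tapply_cong) auto
  also have "\<dots> = (\<Sum>l<d K. w l * gv k d Z vt l)"
    using gv_expand[OF k, of d Z "vt(K := w)"] unfolding K_def by simp
  also have "\<dots> = s * (\<Sum>l<d K. w l * gh l)"
    unfolding gh_def using spos by (simp add: sum_distrib_left)
  finally have fveq: "tapply k d Z fv = s * (\<Sum>l<d K. w l * gh l)" .
  have inner: "(\<Sum>l<d K. w l * gh l) \<ge> 1 - (2/(real k+2))\<^sup>2/2"
    by (rule inner_lower[OF _ ghn wn w(2)]) simp
  have q0: "1 - (2/(real k+2))\<^sup>2/2 > 0"
  proof -
    have "2/(real k+2) \<le> 2/3" using k by (simp add: field_simps)
    hence "(2/(real k+2))\<^sup>2 \<le> (2/3)\<^sup>2" by (intro power_mono) auto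
    moreover have "(2/3::real)\<^sup>2 = 4/9" by (simp add: power2_eq_square)
    ultimately show ?thesis by linarith
  qed
  have "tapply k d Z fv \<ge> s * (1 - (2/(real k+2))\<^sup>2/2)"
    unfolding fveq using spos inner by (intro mult_left_mono) auto
  moreover have "s * (1 - (2/(real k+2))\<^sup>2/2) \<ge> M * ((2*k+1)/(4*k)) * (1 - (2/(real k+2))\<^sup>2/2)"
    using slow2 q0 by (intro mult_right_mono) auto
  moreover have "M * ((2*k+1)/(4*k)) * (1 - (2/(real k+2))\<^sup>2/2) \<ge> M / 2"
  proof -
    have A: "M * (1/2) \<le> M * ((2*real k+1)/(4*real k) * (1 - (2/(real k+2))\<^sup>2/2))"
      using arith1[of "real k"] k M0 by (intro mult_left_mono) auto
    have B: "M * ((2*k+1)/(4*k)) * (1 - (2/(real k+2))\<^sup>2/2) = M * ((2*real k+1)/(4*real k) * (1 - (2/(real k+2))\<^sup>2/2))"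
      by (simp only: mult.assoc of_nat_add of_nat_mult of_nat_numeral of_nat_1)
    show ?thesis using A B by linarith
  qed
  ultimately show ?thesis using fvN unfolding M_def by (intro bexI[of _ fv]) auto
qed

lemma tapply_restrict: "tapply k d (restrict Z (tidx k d)) v = tapply k d Z v"
  unfolding tapply_def by (intro sum.cong) auto

lemma tapply_meas_T: "(\<lambda>T. tapply k d T v) \<in> borel_measurable (tspace k d)"
  unfolding tapply_def tspace_def
  by (intro borel_measurable_sum borel_measurable_times measurable_component_singleton) auto

lemma comp_meas:
  assumes "(\<lambda>\<omega>. restrict (Y \<omega>) (tidx k d)) \<in> measurable M (tspace k d)" "j \<in> tidx k d"
  shows "(\<lambda>\<omega>. Y \<omega> j) \<in> borel_measurable M"
proof -
  have "(\<lambda>\<omega>. restrict (Y \<omega>) (tidx k d) j) \<in> borel_measurable M"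
    using measurable_comp[OF assms(1)[unfolded tspace_def] measurable_component_singleton[OF assms(2), of "\<lambda>_. borel"]]
    by (simp add: comp_def)
  thus ?thesis using assms(2) by simp
qed

lemma tap_meas:
  assumes "(\<lambda>\<omega>. restrict (Y \<omega>) (tidx k d)) \<in> measurable M (tspace k d)"
  shows "(\<lambda>\<omega>. tapply k d (Y \<omega>) v) \<in> borel_measurable M"
  using measurable_comp[OF assms tapply_meas_T[of k d v]] by (simp add: comp_def tapply_restrict)

lemma tapply_basis:
  assumes "j \<in> tidx k d"
  shows "tapply k d Z (\<lambda>i l. if l = j i then 1 else 0) = Z j"
proof -
  have "(\<Prod>i<k. (if j' i = j i then 1 else 0)) = (if j' = j then 1 else (0::real))" if "j' \<in> tidx k d" for j'
  proof (cases "j' = j")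
    case False
    then obtain i where "j' i \<noteq> j i" by auto
    moreover have "i < k"
    proof (rule ccontr)
      assume "\<not> i < k"
      thus False using that assms \<open>j' i \<noteq> j i\<close> unfolding tidx_def by (auto simp: PiE_def extensional_def)
    qed
    ultimately show ?thesis using False by (intro trans[OF prod_zero]) auto
  qed simp
  hence "tapply k d Z (\<lambda>i l. if l = j i then 1 else 0) = (\<Sum>j'\<in>tidx k d. Z j' * (if j' = j then 1 else 0))"
    unfolding tapply_def by (intro sum.cong) auto
  also have "\<dots> = Z j" using assms by (simp add: if_distrib cong: if_cong)
  finally show ?thesis .
qed

lemma basis_unit:
  assumes "j \<in> tidx k d"
  shows "unit_tuple k d (\<lambda>i l. if l = j i then 1 else 0)"
  unfolding unit_tuple_def
proof safe
  fix i assume "i < k"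
  hence "j i < d i" using tidx_lt[OF assms] by simp
  hence "(\<Sum>l<d i. (if l = j i then 1 else 0::real)\<^sup>2) = 1"
    by (simp add: if_distrib[of "\<lambda>x. x\<^sup>2"] cong: if_cong)
  thus "sqrt (\<Sum>l<d i. (if l = j i then 1 else 0::real)\<^sup>2) = 1" by simp
qed

lemma ln32: "ln (3/2::real) \<le> 4/9" "ln (3/2::real) > 0"
proof -
  have "1 + 4/9 + (4/9)\<^sup>2/2 \<le> exp (4/9::real)" by (rule exp_lower_Taylor_quadratic) simp
  hence "3/2 \<le> exp (4/9::real)" by (simp add: power2_eq_square)
  hence "ln (3/2::real) \<le> ln (exp (4/9))" by (subst ln_le_cancel_iff) auto
  thus "ln (3/2::real) \<le> 4/9" by simp
  show "ln (3/2::real) > 0" by simp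
qed

lemma k0_bounds:
  assumes "k \<ge> (1::nat)"
  shows "2 * real k / ln (3/2) \<ge> 9/2 * real k"
proof -
  have "9/2 * real k = 2 * real k / (4/9)" by simp
  also have "\<dots> \<le> 2 * real k / ln (3/2)"
    using ln32 assms by (intro divide_left_mono) auto
  finally show ?thesis .
qed

lemma hoeff_v:
  fixes M :: "'a measure" and Y :: "nat \<Rightarrow> 'a \<Rightarrow> tensor"
  assumes "prob_space M" "n > 0" "a < b" "t > 0"
    and meas: "\<forall>i\<in>{1..n}. (\<lambda>\<omega>. restrict (Y i \<omega>) (tidx k d)) \<in> measurable M (tspace k d)"
    and indep: "prob_space.indep_vars M (\<lambda>_. tspace k d)
                  (\<lambda>i \<omega>. restrict (Y i \<omega>) (tidx k d)) {1..n}"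
    and bnd: "AE \<omega> in M. \<forall>i\<in>{1..n}. \<forall>u. unit_tuple k d u \<longrightarrow>
                 a \<le> tapply k d (Y i \<omega>) u \<and> tapply k d (Y i \<omega>) u \<le> b"
    and v: "unit_tuple k d v"
  shows "measure M {\<omega>\<in>space M. (\<Sum>i\<in>{1..n}. tapply k d (Y i \<omega>) v)
            \<ge> (\<Sum>i\<in>{1..n}. integral\<^sup>L M (\<lambda>\<omega>. tapply k d (Y i \<omega>) v)) + t/2}
         \<le> exp (- (t\<^sup>2) / (2 * real n * (b - a)\<^sup>2))"
proof -
  interpret prob_space M by fact
  have ind: "indep_vars (\<lambda>_. borel) (\<lambda>i \<omega>. tapply k d (Y i \<omega>) v) {1..n}"
    using indep_vars_compose2[OF indep, of "\<lambda>i T. tapply k d T v" "\<lambda>_. borel"] tapply_meas_T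
    by (simp add: tapply_restrict)
  interpret H: Hoeffding_ineq M "{1..n}" "\<lambda>i \<omega>. tapply k d (Y i \<omega>) v" "\<lambda>_. a" "\<lambda>_. b"
    "\<Sum>i\<in>{1..n}. integral\<^sup>L M (\<lambda>\<omega>. tapply k d (Y i \<omega>) v)"
  proof unfold_locales
    show "finite {1..n}" by simp
    show "indep_vars (\<lambda>_. borel) (\<lambda>i \<omega>. tapply k d (Y i \<omega>) v) {1..n}" by (rule ind)
    fix i assume i: "i \<in> {1..n}"
    show "AE x in M. tapply k d (Y i x) v \<in> {a..b}"
      using bnd by eventually_elim (use i v in auto)
  qed simp
  have "measure M {\<omega>\<in>space M. (\<Sum>i\<in>{1..n}. tapply k d (Y i \<omega>) v)
            \<ge> (\<Sum>i\<in>{1..n}. integral\<^sup>L M (\<lambda>\<omega>. tapply k d (Y i \<omega>) v)) + t/2}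
        \<le> exp (-2 * (t/2)\<^sup>2 / (\<Sum>i\<in>{1..n}. ((\<lambda>_. b) i - (\<lambda>_. a) i)\<^sup>2))"
    by (rule H.Hoeffding_ineq_ge) (use assms in auto)
  also have "-2 * (t/2)\<^sup>2 / (\<Sum>i\<in>{1..n}. ((\<lambda>_. b) i - (\<lambda>_. a) i)\<^sup>2) = - (t\<^sup>2) / (2 * real n * (b - a)\<^sup>2)"
    by (simp add: power2_eq_square field_simps)
  finally show ?thesis .
qed

theorem theorem3:
  fixes M :: "'a measure" and k n :: nat and d :: "nat \<Rightarrow> nat"
    and Y :: "nat \<Rightarrow> 'a \<Rightarrow> tensor" and a b t :: real
  assumes "prob_space M"
    and "k \<ge> 1" and "\<forall>i<k. d i \<ge> 1"
    and meas: "\<forall>i\<in>{1..n}. (\<lambda>\<omega>. restrict (Y i \<omega>) (tidx k d)) \<in> measurable M (tspace k d)"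
    and indep: "prob_space.indep_vars M (\<lambda>_. tspace k d)
                  (\<lambda>i \<omega>. restrict (Y i \<omega>) (tidx k d)) {1..n}"
    and ident: "\<forall>i\<in>{1..n}. distr M (tspace k d) (\<lambda>\<omega>. restrict (Y i \<omega>) (tidx k d))
                            = distr M (tspace k d) (\<lambda>\<omega>. restrict (Y 1 \<omega>) (tidx k d))"
    and "a \<le> b"
    and bnd: "AE \<omega> in M. \<forall>i\<in>{1..n}. \<forall>u. unit_tuple k d u \<longrightarrow>
                 a \<le> tapply k d (Y i \<omega>) u \<and> tapply k d (Y i \<omega>) u \<le> b"
    and "t > 0"
  shows "let X = (\<lambda>\<omega> j. \<Sum>i=1..n. Y i \<omega> j);
             EXX = texp M X;
             \<sigma> = b - a;
             k0 = 2 * real k / ln (3/2)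
         in measure M {\<omega>\<in>space M. tnorm k d (\<lambda>j. X \<omega> j - EXX j) \<ge> t}
            \<le> k0 ^ (\<Sum>i<k. d i) * 2 * exp (- (t\<^sup>2) / (2 * real n * \<sigma>\<^sup>2))"
proof -
  interpret P: prob_space M by fact
  have k: "k \<ge> 1" by fact
  define X where "X = (\<lambda>\<omega> j. \<Sum>i=1..n. Y i \<omega> j)"
  define EXX where "EXX = texp M X"
  define \<sigma> where "\<sigma> = b - a"
  define k0 where "k0 = 2 * real k / ln (3/2)"
  define D where "D = (\<Sum>i<k. d i)"
  define S where "S = {\<omega>\<in>space M. tnorm k d (\<lambda>j. X \<omega> j - EXX j) \<ge> t}"
  have k0b: "k0 \<ge> 9/2 * real k" using k0_bounds[OF k] unfolding k0_def .
  have k0ge1: "k0 \<ge> 1" using k0b k by simp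
  have goal: "measure M S \<le> k0 ^ D * 2 * exp (- (t\<^sup>2) / (2 * real n * \<sigma>\<^sup>2))"
  proof (cases "n = 0 \<or> a = b")
    case True
    hence "2 * real n * \<sigma>\<^sup>2 = 0" unfolding \<sigma>_def by auto
    hence e1: "exp (- (t\<^sup>2) / (2 * real n * \<sigma>\<^sup>2)) = 1" by simp
    have "k0 ^ D \<ge> 1" using k0ge1 by (rule one_le_power)
    moreover have "measure M S \<le> 1" by (rule P.prob_le_1)
    ultimately show ?thesis unfolding e1 by linarith
  next
    case False
    hence n: "n > 0" and ab: "a < b" using \<open>a \<le> b\<close> by auto
    define eps where "eps i = (if i < k-1 then 1/(2*real k) else 2/(real k+2))" for i
    have epos: "eps i > 0" for i unfolding eps_def using k by auto
    have "\<forall>i. \<exists>Ni. finite Ni \<and> (\<forall>v\<in>Ni. L2_set v {..<d i} = 1) \<and> real (card Ni) \<le> (1 + 2/eps i) ^ d i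
       \<and> (\<forall>u. L2_set u {..<d i} = 1 \<longrightarrow> (\<exists>v\<in>Ni. L2_set (\<lambda>l. u l - v l) {..<d i} \<le> eps i))"
      by (intro allI net_exists epos)
    from choice[OF this] obtain N where N: "\<forall>i. finite (N i) \<and> (\<forall>v\<in>N i. L2_set v {..<d i} = 1) \<and> real (card (N i)) \<le> (1 + 2/eps i) ^ d i
       \<and> (\<forall>u. L2_set u {..<d i} = 1 \<longrightarrow> (\<exists>v\<in>N i. L2_set (\<lambda>l. u l - v l) {..<d i} \<le> eps i))"
      ..
    have base: "1 + 2/eps i \<le> k0" for i
    proof (cases "i < k-1")
      case True
      hence "k \<ge> 2" by simp
      hence "1 + 2/eps i = 1 + 4 * real k" using True unfolding eps_def by simp
      also have "\<dots> \<le> 9/2 * real k" using \<open>k \<ge> 2\<close> by simp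
      finally show ?thesis using k0b by simp
    next
      case False
      hence "1 + 2/eps i = real k + 3" unfolding eps_def by simp
      also have "\<dots> \<le> 9/2 * real k" using k by simp
      finally show ?thesis using k0b by simp
    qed
    define NT where "NT = PiE {..<k} N"
    have NTfin: "finite NT" unfolding NT_def using N by (intro finite_PiE) auto
    have NTcard: "real (card NT) \<le> k0 ^ D"
    proof -
      have "real (card NT) = (\<Prod>i<k. real (card (N i)))" unfolding NT_def by (simp add: card_PiE)
      also have "\<dots> \<le> (\<Prod>i<k. k0 ^ d i)"
      proof (intro prod_mono conjI)
        fix i assume "i \<in> {..<k}"
        have "real (card (N i)) \<le> (1 + 2/eps i) ^ d i" using N by blast
        also have "\<dots> \<le> k0 ^ d i" using base[of i] epos[of i] by (intro power_mono) (auto simp: less_imp_le)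
        finally show "real (card (N i)) \<le> k0 ^ d i" .
      qed simp
      also have "\<dots> = k0 ^ D" unfolding D_def by (simp add: power_sum)
      finally show ?thesis .
    qed
    have NTunit: "unit_tuple k d v" if "v \<in> NT" for v
      using that N unfolding NT_def unit_tuple_def L2_set_def by (auto simp: PiE_def Pi_def)
    have intY: "integrable M (\<lambda>\<omega>. Y i \<omega> j)" if i: "i \<in> {1..n}" and j: "j \<in> tidx k d" for i j
    proof -
      interpret B: interval_bounded_random_variable M "\<lambda>\<omega>. Y i \<omega> j" a b
      proof unfold_locales
        show "(\<lambda>\<omega>. Y i \<omega> j) \<in> borel_measurable M" using comp_meas meas i j by blast
        show "AE x in M. Y i x j \<in> {a..b}"
          using bnd
        proof eventually_elim
          case (elim x)
          hence "a \<le> tapply k d (Y i x) (\<lambda>i l. if l = j i then 1 else 0) \<and> tapply k d (Y i x) (\<lambda>i l. if l = j i then 1 else 0) \<le> b"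
            using i basis_unit[OF j] by blast
          thus ?case using tapply_basis[OF j] by simp
        qed
      qed
      show ?thesis by (rule B.integrable)
    qed
    define Pv where "Pv v j = (\<Prod>i<k. v i (j i))" for v :: "nat \<Rightarrow> nat \<Rightarrow> real" and j
    define Xv where "Xv v i \<omega> = tapply k d (Y i \<omega>) v" for v i \<omega>
    define \<mu> where "\<mu> v = (\<Sum>i\<in>{1..n}. integral\<^sup>L M (Xv v i))" for v
    have EXXeq: "EXX j = (\<Sum>i\<in>{1..n}. integral\<^sup>L M (\<lambda>\<omega>. Y i \<omega> j))" if j: "j \<in> tidx k d" for j
      unfolding EXX_def texp_def X_def by (rule Bochner_Integration.integral_sum) (use intY j in auto)
    have expXv: "integral\<^sup>L M (Xv v i) = (\<Sum>j\<in>tidx k d. integral\<^sup>L M (\<lambda>\<omega>. Y i \<omega> j) * Pv v j)"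
      if i: "i \<in> {1..n}" for v i
    proof -
      have "integral\<^sup>L M (Xv v i) = (\<Sum>j\<in>tidx k d. integral\<^sup>L M (\<lambda>\<omega>. Y i \<omega> j * Pv v j))"
        unfolding Xv_def tapply_def Pv_def using intY[OF i] by (intro Bochner_Integration.integral_sum) auto
      thus ?thesis by simp
    qed
    have tapZ: "tapply k d (\<lambda>j. X \<omega> j - EXX j) v = (\<Sum>i\<in>{1..n}. Xv v i \<omega>) - \<mu> v" for \<omega> v
    proof -
      have "tapply k d (\<lambda>j. X \<omega> j - EXX j) v = (\<Sum>j\<in>tidx k d. X \<omega> j * Pv v j) - (\<Sum>j\<in>tidx k d. EXX j * Pv v j)"
        unfolding tapply_def Pv_def by (simp add: left_diff_distrib sum_subtractf)
      also have "(\<Sum>j\<in>tidx k d. X \<omega> j * Pv v j) = (\<Sum>i\<in>{1..n}. Xv v i \<omega>)"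
        unfolding X_def Xv_def tapply_def Pv_def by (simp add: sum_distrib_right sum.swap[of _ "tidx k d"])
      also have "(\<Sum>j\<in>tidx k d. EXX j * Pv v j) = (\<Sum>j\<in>tidx k d. (\<Sum>i\<in>{1..n}. integral\<^sup>L M (\<lambda>\<omega>. Y i \<omega> j)) * Pv v j)"
        using EXXeq by (intro sum.cong) auto
      also have "\<dots> = \<mu> v"
        unfolding \<mu>_def using expXv by (simp add: sum_distrib_right sum.swap[of _ "tidx k d"])
      finally show ?thesis .
    qed
    define E where "E v = {\<omega>\<in>space M. (\<Sum>i\<in>{1..n}. Xv v i \<omega>) \<ge> \<mu> v + t/2}" for v
    have Esets: "E v \<in> sets M" for v
    proof -
      have "(\<lambda>\<omega>. \<Sum>i\<in>{1..n}. Xv v i \<omega>) \<in> borel_measurable M"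
        unfolding Xv_def using tap_meas meas by (intro borel_measurable_sum) blast
      hence "{\<omega>\<in>space M. (\<Sum>i\<in>{1..n}. Xv v i \<omega>) \<ge> \<mu> v + t/2} \<in> sets M" by measurable
      thus ?thesis unfolding E_def .
    qed
    have Ebound: "measure M (E v) \<le> exp (- (t\<^sup>2) / (2 * real n * \<sigma>\<^sup>2))" if v: "v \<in> NT" for v
      unfolding E_def \<mu>_def Xv_def \<sigma>_def
      using hoeff_v[OF assms(1) n ab \<open>t > 0\<close> meas indep bnd NTunit[OF v]] by simp
    have sub: "S \<subseteq> (\<Union>v\<in>NT. E v)"
    proof
      fix \<omega> assume w: "\<omega> \<in> S"
      hence tn: "tnorm k d (\<lambda>j. X \<omega> j - EXX j) \<ge> t" and wsp: "\<omega> \<in> space M" unfolding S_def by auto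
      have "\<exists>v\<in>PiE {..<k} N. tapply k d (\<lambda>j. X \<omega> j - EXX j) v \<ge> tnorm k d (\<lambda>j. X \<omega> j - EXX j) / 2"
      proof (rule det_main[OF k \<open>\<forall>i<k. d i \<ge> 1\<close>])
        show "tnorm k d (\<lambda>j. X \<omega> j - EXX j) > 0" using tn \<open>t > 0\<close> by simp
        show "\<forall>i<k. \<forall>v\<in>N i. L2_set v {..<d i} = 1" using N by blast
        show "\<forall>i<k-1. \<forall>u. L2_set u {..<d i} = 1 \<longrightarrow> (\<exists>v\<in>N i. L2_set (\<lambda>l. u l - v l) {..<d i} \<le> 1/(2*real k))"
        proof (intro allI impI)
          fix i u assume "i < k-1" "L2_set u {..<d i} = 1"
          thus "\<exists>v\<in>N i. L2_set (\<lambda>l. u l - v l) {..<d i} \<le> 1/(2*real k)"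
            using N[rule_format, of i] unfolding eps_def by simp
        qed
        show "\<forall>u. L2_set u {..<d (k-1)} = 1 \<longrightarrow> (\<exists>v\<in>N (k-1). L2_set (\<lambda>l. u l - v l) {..<d (k-1)} \<le> 2/(real k+2))"
          using N[rule_format, of "k-1"] unfolding eps_def by simp
      qed
      then obtain v where v: "v \<in> NT" "tapply k d (\<lambda>j. X \<omega> j - EXX j) v \<ge> t/2"
        using tn \<open>t > 0\<close> unfolding NT_def by (meson divide_right_mono order_trans zero_le_numeral)
      hence "\<omega> \<in> E v" using wsp tapZ[of \<omega> v] unfolding E_def by simp
      thus "\<omega> \<in> (\<Union>v\<in>NT. E v)" using v by blast
    qed
    have "measure M S \<le> measure M (\<Union>v\<in>NT. E v)"
      using sub NTfin Esets by (intro P.finite_measure_mono) auto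
    also have "\<dots> \<le> (\<Sum>v\<in>NT. measure M (E v))"
      using NTfin Esets by (intro P.finite_measure_subadditive_finite) auto
    also have "\<dots> \<le> (\<Sum>v\<in>NT. exp (- (t\<^sup>2) / (2 * real n * \<sigma>\<^sup>2)))"
      using Ebound by (intro sum_mono) auto
    also have "\<dots> = real (card NT) * exp (- (t\<^sup>2) / (2 * real n * \<sigma>\<^sup>2))" by simp
    also have "\<dots> \<le> k0 ^ D * exp (- (t\<^sup>2) / (2 * real n * \<sigma>\<^sup>2))"
      using NTcard by (intro mult_right_mono) auto
    also have "\<dots> \<le> k0 ^ D * 2 * exp (- (t\<^sup>2) / (2 * real n * \<sigma>\<^sup>2))"
      using k0ge1 by simp
    finally show ?thesis .
  qed
  thus ?thesis unfolding Let_def X_def EXX_def \<sigma>_def k0_def S_def D_def by simp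
qed

end
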